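(* Let $k\ge 3$ and $s\ge 1$ be integers. For every sufficiently large $n$ there exists $\mathcal{G} \subset \binom{[n]}{k}$ with $\nu(\mathcal{G}) = s$ and $|\mathcal{G}| = (1+o(1))\binom{2s+1}{2}\binom{n}{k-2}$ (as $n\to\infty$) such that $|\partial\mathcal{G}| < |\partial L_{|\mathcal{G}|}EM(n,k,s,1)|$.
   Context: $[n]=\{1,\dots,n\}$, $\binom{[n]}{k}$ is the family of $k$-subsets of $[n]$. $\nu(\mathcal{G})$ is the maximum number of pairwise disjoint members of $\mathcal{G}$. $\partial\mathcal{G}=\{A\in\binom{[n]}{k-1}: A\subset B\text{ for some }B\in\mathcal{G}\}$. Colex order on $\binom{[n]}{k}$: $A\prec B$ iff $\max\big((A\setminus B)\cup(B\setminus A)\big)\in B$; for $\mathcal{F}\subset\binom{[n]}{k}$ and $m\le|\mathcal{F}|$, $L_m\mathcal{F}$ is the set of the first $m$ members of $\mathcal{F}$ in colex order. $EM(n,k,s,1)=\{A\in\binom{[n]}{k}: A\cap[s]\ne\emptyset\}$. *)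

theory Defs
  imports Main "HOL-Library.Landau_Symbols"
begin

definition ksubsets :: "nat \<Rightarrow> nat \<Rightarrow> nat set set" where
  "ksubsets n k = {A. A \<subseteq> {1..n} \<and> card A = k}"

definition nu :: "nat set set \<Rightarrow> nat" where
  "nu G = Max {card M | M. M \<subseteq> G \<and> pairwise disjnt M}"

definition shadow :: "nat \<Rightarrow> nat set set \<Rightarrow> nat set set" where
  "shadow k G = {A. card A = k - 1 \<and> (\<exists>B\<in>G. A \<subseteq> B)}"

definition colex_less :: "nat set \<Rightarrow> nat set \<Rightarrow> bool" where
  "colex_less A B \<longleftrightarrow> A \<noteq> B \<and> Max ((A - B) \<union> (B - A)) \<in> B"

definition colex_initial :: "nat \<Rightarrow> nat set set \<Rightarrow> nat set set" where
  "colex_initial m F = {A \<in> F. card {B \<in> F. colex_less B A} < m}"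

definition EM :: "nat \<Rightarrow> nat \<Rightarrow> nat \<Rightarrow> nat set set" where
  "EM n k s = {A \<in> ksubsets n k. A \<inter> {1..s} \<noteq> {}}"

end

theory Submission
  imports Defs
begin

lemma colex_bound:
  assumes "finite A" "finite B" "A \<subseteq> {1..T}" "colex_less B A" "x \<in> B"
  shows "x \<le> T"
proof (rule ccontr)
  assume "\<not> x \<le> T"
  hence xA: "x \<notin> A" using assms(3) by auto
  let ?D = "(B - A) \<union> (A - B)"
  have fin: "finite ?D" using assms(1,2) by auto
  have "x \<in> ?D" using xA assms(5) by auto
  hence "x \<le> Max ?D" using fin by auto
  moreover have "Max ?D \<in> A" using assms(4) unfolding colex_less_def by auto
  hence "Max ?D \<le> T" using assms(3) by auto
  ultimately show False using \<open>\<not> x \<le> T\<close> by simp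
qed

lemma EM_sub: "A \<in> EM n k s \<Longrightarrow> A \<subseteq> {1..n} \<and> card A = k"
  unfolding EM_def ksubsets_def by auto

lemma EM_fin: "A \<in> EM n k s \<Longrightarrow> finite A"
  unfolding EM_def ksubsets_def using finite_subset[of A "{1..n}"] by auto

lemma prefix_in_initial:
  assumes "card {A \<in> EM n k s. A \<subseteq> {1..T}} \<le> m"
  shows "{A \<in> EM n k s. A \<subseteq> {1..T}} \<subseteq> colex_initial m (EM n k s)"
proof
  fix A assume A: "A \<in> {A \<in> EM n k s. A \<subseteq> {1..T}}"
  let ?P = "{A \<in> EM n k s. A \<subseteq> {1..T}}"
  have finP: "finite ?P"
    by (rule finite_subset[of _ "Pow {1..n}"]) (auto simp: EM_def ksubsets_def)
  have "{B \<in> EM n k s. colex_less B A} \<subseteq> ?P - {A}"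
  proof
    fix B assume B: "B \<in> {B \<in> EM n k s. colex_less B A}"
    have fA: "finite A" using A EM_fin by blast
    have fB: "finite B" using B EM_fin by blast
    have "B \<subseteq> {1..T}"
    proof
      fix x assume "x \<in> B"
      hence "x \<le> T" using colex_bound[OF fA fB _ _ \<open>x \<in> B\<close>] A B by auto
      moreover have "1 \<le> x" using B \<open>x \<in> B\<close> EM_sub by fastforce
      ultimately show "x \<in> {1..T}" by simp
    qed
    moreover have "B \<noteq> A" using B unfolding colex_less_def by auto
    ultimately show "B \<in> ?P - {A}" using B by auto
  qed
  hence "card {B \<in> EM n k s. colex_less B A} \<le> card (?P - {A})"
    using finP by (intro card_mono) auto
  also have "\<dots> < card ?P" using finP A by (intro psubset_card_mono) auto
  finally show "A \<in> colex_initial m (EM n k s)"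
    using A assms unfolding colex_initial_def by auto
qed

lemma card_contain:
  assumes "i \<in> {1..T}" "k \<ge> 1"
  shows "card {A. A \<subseteq> {1..T} \<and> card A = k \<and> i \<in> A} \<le> (T - 1) choose (k - 1)"
proof -
  have "{A. A \<subseteq> {1..T} \<and> card A = k \<and> i \<in> A} \<subseteq> insert i ` {B. B \<subseteq> {1..T} - {i} \<and> card B = k - 1}"
  proof
    fix A assume A: "A \<in> {A. A \<subseteq> {1..T} \<and> card A = k \<and> i \<in> A}"
    hence "finite A" using finite_subset[of A "{1..T}"] by auto
    hence "card (A - {i}) = k - 1" using A by auto
    moreover have "A = insert i (A - {i})" using A by auto
    ultimately show "A \<in> insert i ` {B. B \<subseteq> {1..T} - {i} \<and> card B = k - 1}" using A by blast
  qed
  hence "card {A. A \<subseteq> {1..T} \<and> card A = k \<and> i \<in> A} \<le> card (insert i ` {B. B \<subseteq> {1..T} - {i} \<and> card B = k - 1})"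
    by (intro card_mono) auto
  also have "\<dots> \<le> card {B. B \<subseteq> {1..T} - {i} \<and> card B = k - 1}" by (rule card_image_le) auto
  also have "\<dots> = card ({1..T} - {i}) choose (k - 1)" by (rule n_subsets) auto
  also have "card ({1..T} - {i}) = T - 1" using assms by auto
  finally show ?thesis .
qed

lemma card_prefix:
  assumes "k \<ge> 1" "s \<le> T"
  shows "card {A \<in> EM n k s. A \<subseteq> {1..T}} \<le> s * ((T - 1) choose (k - 1))"
proof -
  have "{A \<in> EM n k s. A \<subseteq> {1..T}} \<subseteq> (\<Union>i\<in>{1..s}. {A. A \<subseteq> {1..T} \<and> card A = k \<and> i \<in> A})"
    unfolding EM_def ksubsets_def by auto
  hence "card {A \<in> EM n k s. A \<subseteq> {1..T}} \<le> card (\<Union>i\<in>{1..s}. {A. A \<subseteq> {1..T} \<and> card A = k \<and> i \<in> A})"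
    by (intro card_mono) auto
  also have "\<dots> \<le> (\<Sum>i\<in>{1..s}. card {A. A \<subseteq> {1..T} \<and> card A = k \<and> i \<in> A})"
    by (rule card_UN_le) auto
  also have "\<dots> \<le> (\<Sum>i\<in>{1..s}. (T - 1) choose (k - 1))"
    using assms by (intro sum_mono card_contain) auto
  finally show ?thesis by simp
qed

lemma shadow_prefix:
  assumes "k \<ge> 1" "k \<le> T" "T \<le> n" "s \<ge> 1"
  shows "{B. B \<subseteq> {1..T} \<and> card B = k - 1} \<subseteq> shadow k {A \<in> EM n k s. A \<subseteq> {1..T}}"
proof
  fix B assume B: "B \<in> {B. B \<subseteq> {1..T} \<and> card B = k - 1}"
  have fB: "finite B" using B finite_subset[of B "{1..T}"] by auto
  obtain x where x: "x \<in> {1..T}" "x \<notin> B" "B \<inter> {1..s} = {} \<longrightarrow> x = 1"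
  proof (cases "B \<inter> {1..s} = {}")
    case True
    have "1 \<notin> B" using True assms(4) by auto
    then show ?thesis using that[of 1] assms by auto
  next
    case False
    have "card B < card {1..T}" using B assms(1,2) by simp
    have "\<not> {1..T} \<subseteq> B"
    proof
      assume "{1..T} \<subseteq> B"
      hence "card {1..T} \<le> card B" by (rule card_mono[OF fB])
      thus False using \<open>card B < card {1..T}\<close> by simp
    qed
    then obtain y where "y \<in> {1..T}" "y \<notin> B" by blast
    then show ?thesis using that[of y] False by blast
  qed
  have "insert x B \<in> {A \<in> EM n k s. A \<subseteq> {1..T}}"
    using x B fB assms unfolding EM_def ksubsets_def by auto
  thus "B \<in> shadow k {A \<in> EM n k s. A \<subseteq> {1..T}}" using B unfolding shadow_def by blast
qed

lemma shadow_mono: "G \<subseteq> H \<Longrightarrow> shadow k G \<subseteq> shadow k H"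
  unfolding shadow_def by blast

lemma shadow_fin: "H \<subseteq> ksubsets n k \<Longrightarrow> finite (shadow k H)"
  by (rule finite_subset[of _ "Pow {1..n}"]) (auto simp: shadow_def ksubsets_def)

lemma colex_initial_sub: "colex_initial m F \<subseteq> F"
  unfolding colex_initial_def by auto

lemma shadow_initial_lower:
  assumes "k \<ge> 1" "k \<le> T" "T \<le> n" "s \<ge> 1" "s \<le> T"
    and "s * ((T - 1) choose (k - 1)) \<le> m"
  shows "T choose (k - 1) \<le> card (shadow k (colex_initial m (EM n k s)))"
proof -
  have "{A \<in> EM n k s. A \<subseteq> {1..T}} \<subseteq> colex_initial m (EM n k s)"
    using card_prefix[of k s T n] assms by (intro prefix_in_initial) auto
  hence "{B. B \<subseteq> {1..T} \<and> card B = k - 1} \<subseteq> shadow k (colex_initial m (EM n k s))"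
    using shadow_prefix[OF assms(1-4)] shadow_mono by blast
  moreover have "finite (shadow k (colex_initial m (EM n k s)))"
    by (rule shadow_fin[of _ n]) (auto simp: colex_initial_def EM_def)
  ultimately have "card {B. B \<subseteq> {1..T} \<and> card B = k - 1} \<le> card (shadow k (colex_initial m (EM n k s)))"
    by (rule card_mono[rotated])
  thus ?thesis by (simp add: n_subsets)
qed

lemma disj_blocks:
  fixes q j i i' :: nat
  assumes "i < i'" "2*i' + 2 \<le> q"
  shows "({2*i+1, 2*i+2} \<union> {q+i*j+1..q+i*j+j}) \<inter> ({2*i'+1, 2*i'+2} \<union> {q+i'*j+1..q+i'*j+j}) = {}"
proof -
  have "(i+1)*j \<le> i'*j" using assms by (intro mult_le_mono1) simp
  hence h: "i*j + j \<le> i'*j" by (simp add: algebra_simps)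
  show ?thesis using assms h by auto
qed

lemma construction:
  fixes n s j f :: nat and F :: "nat set set"
  defines "q \<equiv> 2*s+1"
  defines "Q \<equiv> {1..q}" and "R \<equiv> {q+1..n}"
  defines "Pairs \<equiv> {P. P \<subseteq> Q \<and> card P = 2}"
  defines "G \<equiv> (\<lambda>(P,X). P \<union> X) ` (Pairs \<times> F)"
  assumes F: "F \<subseteq> {X. X \<subseteq> R \<and> card X = j}" and cF: "card F = f"
    and j: "j \<ge> 1" and s: "s \<ge> 1" and qn: "q \<le> n"
    and F0: "\<forall>i<s. {q+i*j+1..q+i*j+j} \<in> F"
  shows "G \<subseteq> ksubsets n (Suc (Suc j))" "card G = (q choose 2) * f" "nu G = s"
    "card (shadow (Suc (Suc j)) G) \<le> q*f + (q choose 2) * ((n - q) choose (j - 1))"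
proof -
  have QR: "Q \<inter> R = {}" unfolding Q_def R_def by auto
  have finF: "finite F" by (rule finite_subset[OF F]) (auto simp: R_def)
  have finPairs: "finite Pairs" unfolding Pairs_def Q_def by auto
  have XR: "X \<subseteq> R" "card X = j" "finite X" if "X \<in> F" for X
    using F that finite_subset[of X R] by (auto simp: R_def)
  have PQ: "P \<subseteq> Q" "card P = 2" "finite P" if "P \<in> Pairs" for P
    using that finite_subset[of P Q] by (auto simp: Pairs_def Q_def)
  have rec: "(P \<union> X) \<inter> Q = P" "(P \<union> X) - Q = X" if "P \<in> Pairs" "X \<in> F" for P X
    using PQ[OF that(1)] XR[OF that(2)] QR by auto
  have GE: "A \<in> G \<longleftrightarrow> (\<exists>P X. P \<in> Pairs \<and> X \<in> F \<and> A = P \<union> X)" for A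
    unfolding G_def by auto
  have cardA: "card (P \<union> X) = Suc (Suc j)" if "P \<in> Pairs" "X \<in> F" for P X
    using PQ[OF that(1)] XR[OF that(2)] QR by (subst card_Un_disjoint) auto
  show sub: "G \<subseteq> ksubsets n (Suc (Suc j))"
  proof
    fix A assume "A \<in> G"
    then obtain P X where PX: "P \<in> Pairs" "X \<in> F" "A = P \<union> X" using GE by blast
    have "P \<subseteq> {1..n}" using PQ[OF PX(1)] qn unfolding Q_def by auto
    moreover have "X \<subseteq> {1..n}" using XR[OF PX(2)] unfolding R_def by auto
    ultimately show "A \<in> ksubsets n (Suc (Suc j))" using PX cardA unfolding ksubsets_def by auto
  qed
  have inj: "inj_on (\<lambda>(P,X). P \<union> X) (Pairs \<times> F)"
  proof (rule inj_onI)
    fix a b assume ab: "a \<in> Pairs \<times> F" "b \<in> Pairs \<times> F" "(\<lambda>(P,X). P \<union> X) a = (\<lambda>(P,X). P \<union> X) b"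
    obtain P X P' X' where e: "a = (P,X)" "b = (P',X')" by fastforce
    have m: "P \<in> Pairs" "X \<in> F" "P' \<in> Pairs" "X' \<in> F" using ab e by auto
    have eq: "P \<union> X = P' \<union> X'" using ab e by simp
    have "P = P'" using rec(1)[OF m(1,2)] rec(1)[OF m(3,4)] eq by simp
    moreover have "X = X'" using rec(2)[OF m(1,2)] rec(2)[OF m(3,4)] eq by simp
    ultimately show "a = b" using e by simp
  qed
  have cardPairs: "card Pairs = q choose 2" unfolding Pairs_def by (subst n_subsets) (auto simp: Q_def)
  show "card G = (q choose 2) * f"
    unfolding G_def using card_image[OF inj] cardPairs cF by (simp add: card_cartesian_product)
  have finG: "finite G" unfolding G_def using finPairs finF by auto
  have upper: "card M \<le> s" if M: "M \<subseteq> G" "pairwise disjnt M" for M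
  proof -
    have finM: "finite M" using finite_subset[OF M(1) finG] .
    have two: "card (A \<inter> Q) = 2" if "A \<in> M" for A
    proof -
      have "A \<in> G" using that M(1) by blast
      then obtain P X where PX: "P \<in> Pairs" "X \<in> F" "A = P \<union> X" unfolding GE by blast
      show ?thesis using rec(1)[OF PX(1,2)] PQ(2)[OF PX(1)] PX(3) by simp
    qed
    have "card (\<Union>A\<in>M. A \<inter> Q) = (\<Sum>A\<in>M. card (A \<inter> Q))"
    proof (rule card_UN_disjoint[OF finM])
      show "\<forall>i\<in>M. finite (i \<inter> Q)" unfolding Q_def by auto
      show "\<forall>i\<in>M. \<forall>j\<in>M. i \<noteq> j \<longrightarrow> i \<inter> Q \<inter> (j \<inter> Q) = {}"
        using M(2) unfolding pairwise_def disjnt_def by blast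
    qed
    also have "\<dots> = 2 * card M" using two by simp
    finally have "2 * card M = card (\<Union>A\<in>M. A \<inter> Q)" by simp
    also have "\<dots> \<le> card Q" by (rule card_mono) (auto simp: Q_def)
    also have "\<dots> = 2*s+1" by (simp add: Q_def q_def)
    finally show ?thesis by simp
  qed
  define blk where "blk i = {2*i+1, 2*i+2} \<union> {q+i*j+1..q+i*j+j}" for i
  define M0 where "M0 = blk ` {..<s}"
  have blk_disj: "blk i \<inter> blk i' = {}" if "i < s" "i' < s" "i \<noteq> i'" for i i'
  proof (cases "i < i'")
    case True thus ?thesis unfolding blk_def using that q_def by (intro disj_blocks) auto
  next
    case False hence "i' < i" using that by simp
    thus ?thesis unfolding blk_def using that q_def disj_blocks[of i' i q j] by (auto simp: Int_commute)
  qed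
  have blk_ne: "blk i \<noteq> {}" for i unfolding blk_def by auto
  have injblk: "inj_on blk {..<s}"
    by (rule inj_onI) (metis blk_disj blk_ne Int_absorb lessThan_iff)
  have cardM0: "card M0 = s" unfolding M0_def using card_image[OF injblk] by simp
  have M0G: "M0 \<subseteq> G"
  proof
    fix A assume "A \<in> M0"
    then obtain i where i: "i < s" "A = blk i" unfolding M0_def by auto
    have "{2*i+1, 2*i+2} \<in> Pairs" using i unfolding Pairs_def Q_def q_def by auto
    moreover have "{q+i*j+1..q+i*j+j} \<in> F" using F0 i by auto
    ultimately show "A \<in> G" using i GE unfolding blk_def by blast
  qed
  have M0disj: "pairwise disjnt M0"
    unfolding M0_def pairwise_def disjnt_def using blk_disj by fastforce
  show "nu G = s"
    unfolding nu_def
  proof (rule Max_eqI)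
    show "finite {card M |M. M \<subseteq> G \<and> pairwise disjnt M}"
      by (rule finite_subset[of _ "{..s}"]) (use upper in auto)
    show "y \<le> s" if "y \<in> {card M |M. M \<subseteq> G \<and> pairwise disjnt M}" for y
      using that upper by auto
    show "s \<in> {card M |M. M \<subseteq> G \<and> pairwise disjnt M}" using M0G M0disj cardM0 by auto
  qed
  define S1 where "S1 = (\<lambda>(y,X). insert y X) ` (Q \<times> F)"
  define Rj where "Rj = {Y. Y \<subseteq> R \<and> card Y = j - 1}"
  define S2 where "S2 = (\<lambda>(P,Y). P \<union> Y) ` (Pairs \<times> Rj)"
  have "shadow (Suc (Suc j)) G \<subseteq> S1 \<union> S2"
  proof
    fix B assume "B \<in> shadow (Suc (Suc j)) G"
    then obtain A where B: "card B = Suc j" "A \<in> G" "B \<subseteq> A" unfolding shadow_def by auto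
    then obtain P X where PX: "P \<in> Pairs" "X \<in> F" "A = P \<union> X" using GE by blast
    have finA: "finite A" using PX PQ XR by auto
    have "card (A - B) = 1" using card_Diff_subset[OF finite_subset[OF B(3) finA] B(3)] B cardA PX by simp
    then obtain x where x: "A - B = {x}" using card_1_singletonE by blast
    have Bx: "B = A - {x}" using x B(3) by blast
    show "B \<in> S1 \<union> S2"
    proof (cases "x \<in> P")
      case True
      have "card (P - {x}) = 1" using PQ[OF PX(1)] True by simp
      then obtain y where y: "P - {x} = {y}" using card_1_singletonE by blast
      have "x \<notin> X" using True PQ[OF PX(1)] XR[OF PX(2)] QR by blast
      hence "B = insert y X" using Bx PX(3) y by blast
      moreover have "y \<in> Q" using y PQ[OF PX(1)] by blast
      ultimately show ?thesis unfolding S1_def using PX(2) by blast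
    next
      case False
      hence xX: "x \<in> X" using x PX by blast
      have "B = P \<union> (X - {x})" using Bx PX(3) False by blast
      moreover have "X - {x} \<in> Rj" unfolding Rj_def using XR[OF PX(2)] xX by auto
      ultimately show ?thesis unfolding S2_def using PX(1) by blast
    qed
  qed
  hence "card (shadow (Suc (Suc j)) G) \<le> card (S1 \<union> S2)"
    unfolding S1_def S2_def Rj_def using finF finPairs
    by (intro card_mono) (auto simp: Q_def R_def)
  also have "\<dots> \<le> card S1 + card S2" by (rule card_Un_le)
  also have "card S1 \<le> q * f"
  proof -
    have "card S1 \<le> card (Q \<times> F)" unfolding S1_def
      by (rule card_image_le) (use finF in \<open>auto simp: Q_def\<close>)
    also have "\<dots> = card Q * card F" by (rule card_cartesian_product)
    finally show ?thesis using cF by (simp add: Q_def)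
  qed
  also have "card S2 \<le> (q choose 2) * ((n - q) choose (j - 1))"
  proof -
    have "card S2 \<le> card (Pairs \<times> Rj)" unfolding S2_def
      by (rule card_image_le) (use finPairs in \<open>auto simp: Rj_def R_def\<close>)
    also have "\<dots> = card Pairs * card Rj" by (rule card_cartesian_product)
    also have "card Rj = (n - q) choose (j - 1)" unfolding Rj_def R_def by (subst n_subsets) auto
    finally show ?thesis using cardPairs by simp
  qed
  finally show "card (shadow (Suc (Suc j)) G) \<le> q*f + (q choose 2) * ((n - q) choose (j - 1))" by simp
qed

lemma pow_le_binom:
  assumes "1 \<le> r" "r \<le> m"
  shows "m ^ r \<le> r ^ r * (m choose r)"
proof -
  have "(real m / real r) ^ r \<le> real (m choose r)" using binomial_ge_n_over_k_pow_k[OF assms(2)] by simp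
  hence "real m ^ r / real r ^ r \<le> real (m choose r)" by (simp add: power_divide)
  hence "real m ^ r \<le> real r ^ r * real (m choose r)" using assms by (simp add: divide_le_eq mult.commute)
  hence "real (m ^ r) \<le> real (r ^ r * (m choose r))" by simp
  thus ?thesis by linarith
qed

lemma lin_le_binom:
  assumes "1 \<le> r" "r \<le> m"
  shows "m \<le> r ^ r * (m choose r)"
proof -
  have "m \<le> m ^ r" using assms by (cases m) (auto intro: self_le_power)
  thus ?thesis using pow_le_binom[OF assms] by linarith
qed

lemma binom_ID: "Suc k * (n choose Suc k) = (n - k) * (n choose k)"
  by (metis binomial_absorption binomial_absorb_comp)

lemma binom_shift: "(m + d) choose Suc r \<le> (m choose Suc r) + d * ((m + d) choose r)"
proof (induction d)
  case 0 then show ?case by simp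
next
  case (Suc d)
  have "(m + Suc d) choose Suc r = ((m + d) choose Suc r) + ((m + d) choose r)" by simp
  also have "\<dots> \<le> (m choose Suc r) + d * ((m + d) choose r) + ((m + d) choose r)" using Suc by simp
  also have "(m + d) choose r \<le> (m + Suc d) choose r" by (rule binomial_right_mono) simp
  hence "d * ((m + d) choose r) \<le> d * ((m + Suc d) choose r)" by simp
  finally show ?case using \<open>(m + d) choose r \<le> (m + Suc d) choose r\<close> by simp
qed

lemma exists_big: "\<exists>u. X < Suc u choose Suc j"
proof -
  define u where "u = (Suc j) ^ Suc j * (X + 1)"
  have "Suc j \<le> Suc j ^ Suc j" by (rule self_le_power) auto
  moreover have "Suc j ^ Suc j \<le> u" by (simp add: u_def)
  ultimately have "Suc j \<le> Suc u" by linarith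
  hence "Suc u \<le> Suc j ^ Suc j * (Suc u choose Suc j)"
    by (intro lin_le_binom) auto
  define c where "c = Suc u choose Suc j"
  have "Suc j ^ Suc j * (X + 1) < Suc j ^ Suc j * c" using \<open>Suc u \<le> _\<close> unfolding c_def u_def by simp
  hence "X + 1 < c" by (metis mult_less_cancel1)
  hence "X < Suc u choose Suc j" unfolding c_def by linarith
  thus ?thesis by blast
qed

lemma key_ineq:
  fixes q C2 b u j :: nat
  defines "K \<equiv> q - 1 + C2"
  assumes j: "j \<ge> 1" and q: "q \<ge> 1" and b: "b \<ge> j" and u: "u \<ge> j"
    and h: "q * (b choose j) < (u choose j) + (u choose Suc j)"
    and big: "u > j ^ j * K * (2 * K * j ^ j) ^ (j - 1)"
  shows "q - 1 + C2 * (b choose (j - 1)) < u choose j"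
proof (rule ccontr)
  assume "\<not> ?thesis"
  hence X: "u choose j \<le> q - 1 + C2 * (b choose (j - 1))" by simp
  have b1: "b \<ge> 1" "u \<ge> 1" using b u j by auto
  have p1: "1 \<le> b ^ (j - 1)" using b1 by simp
  have "b choose (j - 1) \<le> b ^ (j - 1)" by (rule binomial_le_pow) (use b in auto)
  hence "q - 1 + C2 * (b choose (j - 1)) \<le> (q - 1) * b ^ (j - 1) + C2 * b ^ (j - 1)"
    using p1 by (intro add_mono) auto
  also have "\<dots> = K * b ^ (j - 1)" unfolding K_def by (simp add: algebra_simps)
  finally have XK: "u choose j \<le> K * b ^ (j - 1)" using X by linarith
  have "Suc j * (u choose Suc j) = (u - j) * (u choose j)" by (rule binom_ID)
  also have "\<dots> \<le> u * (u choose j)" by simp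
  finally have Y0: "Suc j * (u choose Suc j) \<le> u * (u choose j)" .
  have "u choose Suc j \<le> Suc j * (u choose Suc j)" by simp
  hence Y: "u choose Suc j \<le> u * (u choose j)" using Y0 by linarith
  have "q * (b choose j) < (u + 1) * (u choose j)" using h Y by simp
  also have "\<dots> \<le> (u + 1) * (K * b ^ (j - 1))" using XK by (rule mult_le_mono2)
  finally have c: "q * (b choose j) < (u + 1) * K * b ^ (j - 1)" by (simp only: mult.assoc)
  have "b ^ j \<le> j ^ j * (b choose j)" by (rule pow_le_binom) (use j b in auto)
  also have "\<dots> \<le> j ^ j * (q * (b choose j))" using q by simp
  also have "\<dots> < j ^ j * ((u + 1) * K * b ^ (j - 1))"
    using c j by (intro mult_strict_left_mono) auto
  finally have e1: "b ^ j < j ^ j * ((u + 1) * K * b ^ (j - 1))" .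
  have e2: "b ^ j = b * b ^ (j - 1)" using j by (cases j) auto
  have e3: "j ^ j * ((u + 1) * K * b ^ (j - 1)) = (j ^ j * (u + 1) * K) * b ^ (j - 1)" by (simp only: mult.assoc)
  have "b * b ^ (j - 1) < (j ^ j * (u + 1) * K) * b ^ (j - 1)" using e1 e2 e3 by (simp only:)
  hence "b < j ^ j * (u + 1) * K" by (metis mult_less_cancel2)
  also have "\<dots> \<le> j ^ j * (2 * u) * K" using b1 by (intro mult_le_mono) auto
  finally have bb: "b \<le> 2 * K * j ^ j * u" by (simp add: algebra_simps)
  have "u * u ^ (j - 1) = u ^ j" using j by (cases j) auto
  also have "\<dots> \<le> j ^ j * (u choose j)" by (rule pow_le_binom) (use j u in auto)
  also have "\<dots> \<le> j ^ j * (K * b ^ (j - 1))" using XK by simp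
  also have "b ^ (j - 1) \<le> (2 * K * j ^ j * u) ^ (j - 1)" using bb by (rule power_mono) simp
  hence "j ^ j * (K * b ^ (j - 1)) \<le> j ^ j * (K * (2 * K * j ^ j * u) ^ (j - 1))" by simp
  also have "\<dots> = (j ^ j * K * (2 * K * j ^ j) ^ (j - 1)) * u ^ (j - 1)"
    by (simp add: power_mult_distrib algebra_simps)
  finally have "u * u ^ (j - 1) \<le> (j ^ j * K * (2 * K * j ^ j) ^ (j - 1)) * u ^ (j - 1)" .
  hence "u \<le> j ^ j * K * (2 * K * j ^ j) ^ (j - 1)" using b1 by simp
  thus False using big by simp
qed

lemma exists_F:
  fixes q s j n f :: nat
  assumes "q + s*j \<le> n" "s \<le> f" "f \<le> (n - q) choose j"
  shows "\<exists>F. F \<subseteq> {X. X \<subseteq> {q+1..n} \<and> card X = j} \<and> card F = f \<and> (\<forall>i<s. {q+i*j+1..q+i*j+j} \<in> F)"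
proof -
  define U where "U = {X. X \<subseteq> {q+1..n} \<and> card X = j}"
  define F0 where "F0 = (\<lambda>i. {q+i*j+1..q+i*j+j}) ` {..<s}"
  have finU: "finite U" unfolding U_def by simp
  have cardU: "card U = (n - q) choose j" unfolding U_def by (subst n_subsets) auto
  have F0U: "F0 \<subseteq> U"
  proof
    fix X assume "X \<in> F0"
    then obtain i where i: "i < s" "X = {q+i*j+1..q+i*j+j}" unfolding F0_def by auto
    have "(i+1)*j \<le> s*j" using i by (intro mult_le_mono1) simp
    hence "i*j + j \<le> s*j" by (simp add: algebra_simps)
    hence "X \<subseteq> {q+1..n}" using i assms(1) by auto
    moreover have "card X = j" using i by simp
    ultimately show "X \<in> U" unfolding U_def by simp
  qed
  have cF0: "card F0 \<le> s" unfolding F0_def using card_image_le[of "{..<s}"] by simp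
  have "f - card F0 \<le> card (U - F0)"
    using card_Diff_subset[OF finite_subset[OF F0U finU] F0U] cardU assms cF0 by simp
  then obtain F1 where F1: "F1 \<subseteq> U - F0" "card F1 = f - card F0" "finite F1"
    by (rule obtain_subset_with_card_n)
  have finF0: "finite F0" unfolding F0_def by simp
  have "card (F0 \<union> F1) = card F0 + card F1" using F1 finF0 by (intro card_Un_disjoint) auto
  hence "card (F0 \<union> F1) = f" using F1 cF0 assms(2) by simp
  moreover have "F0 \<union> F1 \<subseteq> U" using F0U F1 by auto
  moreover have "\<forall>i<s. {q+i*j+1..q+i*j+j} \<in> F0 \<union> F1" unfolding F0_def by auto
  ultimately show ?thesis unfolding U_def by blast
qed

lemma filterlim_shift:
  assumes "\<forall>M. eventually (\<lambda>n. M \<le> g n) F"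
  shows "filterlim (\<lambda>n. real (g n) - c) at_top F"
  unfolding filterlim_at_top
proof
  fix Z :: real
  show "eventually (\<lambda>n. Z \<le> real (g n) - c) F"
    using assms[rule_format, of "nat \<lceil>Z + c\<rceil>"]
    by (rule eventually_mono) linarith
qed

lemma tendsto_shift0:
  assumes "\<forall>M. eventually (\<lambda>n. M \<le> g n) F"
  shows "((\<lambda>n. a / (real (g n) - c)) \<longlongrightarrow> 0) F"
  by (rule tendsto_divide_0[OF tendsto_const filterlim_at_top_imp_at_infinity[OF filterlim_shift[OF assms]]])

lemma card_EM_lower:
  assumes "k \<ge> 1" and that: "s \<ge> 1" and n1: "1 \<le> n"
  shows "(n - 1) choose (k - 1) \<le> card (EM n k s)"
proof -
  have sub: "insert 1 ` {B. B \<subseteq> {2..n} \<and> card B = k - 1} \<subseteq> EM n k s"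
  proof
    fix A assume "A \<in> insert 1 ` {B. B \<subseteq> {2..n} \<and> card B = k - 1}"
    then obtain B where B: "B \<subseteq> {2..n}" "card B = k - 1" "A = insert 1 B" by auto
    have "finite B" using B(1) finite_subset[of B "{2..n}"] by simp
    moreover have "1 \<notin> B" using B(1) by auto
    ultimately have "card A = k" using B assms by simp
    moreover have "A \<subseteq> {1..n}" using B n1 by auto
    ultimately show "A \<in> EM n k s" using B that unfolding EM_def ksubsets_def by auto
  qed
  have inj: "inj_on (insert 1) {B. B \<subseteq> {2..n} \<and> card B = k - 1}"
  proof (rule inj_onI)
    fix x y assume xy: "x \<in> {B. B \<subseteq> {2..n} \<and> card B = k - 1}" "y \<in> {B. B \<subseteq> {2..n} \<and> card B = k - 1}" "insert 1 x = insert 1 y"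
    have "1 \<notin> x" "1 \<notin> y" using xy by auto
    thus "x = y" using xy(3) by (metis Diff_insert_absorb)
  qed
  have "(n - 1) choose (k - 1) = card {B. B \<subseteq> {2..n} \<and> card B = k - 1}" by (subst n_subsets) auto
  also have "\<dots> = card (insert 1 ` {B. B \<subseteq> {2..n} \<and> card B = k - 1})" using card_image[OF inj] by simp
  also have "\<dots> \<le> card (EM n k s)"
    by (rule card_mono[OF _ sub]) (rule finite_subset[of _ "Pow {1..n}"], auto simp: EM_def ksubsets_def)
  finally show ?thesis .
qed

theorem fact1p11:
  fixes k s :: nat
  assumes "k \<ge> 3" and "s \<ge> 1"
  shows "\<exists>G :: nat \<Rightarrow> nat set set.
    (\<lambda>n. real (card (G n))) \<sim>[at_top] (\<lambda>n. real ((2*s+1) choose 2) * real (n choose (k-2))) \<and>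
    (\<forall>\<^sub>F n in at_top.
       G n \<subseteq> ksubsets n k \<and> nu (G n) = s \<and>
       card (G n) \<le> card (EM n k s) \<and>
       card (shadow k (G n)) < card (shadow k (colex_initial (card (G n)) (EM n k s))))"
proof -
  define j where "j = k - 2"
  have kj: "k = Suc (Suc j)" and j1: "j \<ge> 1" using assms(1) unfolding j_def by auto
  have s1: "s \<ge> 1" using assms(2) .
  define q where "q = 2*s+1"
  define C2 where "C2 = q choose 2"
  have q3: "q \<ge> 3" using s1 unfolding q_def by simp
  have C2s: "C2 = s * q"
  proof -
    have "C2 = q * (q - 1) div 2" unfolding C2_def by (rule choose_two)
    also have "q * (q - 1) = 2 * (s * q)" unfolding q_def by (simp add: algebra_simps)
    finally show ?thesis by simp
  qed
  define u where "u n = (LEAST u. q * ((n - q) choose j) < Suc u choose Suc j)" for n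
  define f where "f n = ((u n choose Suc j) + q - 1) div q" for n
  define FF where "FF n = (SOME F. F \<subseteq> {X. X \<subseteq> {q+1..n} \<and> card X = j} \<and> card F = f n \<and> (\<forall>i<s. {q+i*j+1..q+i*j+j} \<in> F))" for n
  define G where "G n = (\<lambda>(P,X). P \<union> X) ` ({P. P \<subseteq> {1..q} \<and> card P = 2} \<times> FF n)" for n
  have P1: "q * ((n - q) choose j) < Suc (u n) choose Suc j" for n
    unfolding u_def by (rule LeastI_ex) (rule exists_big)
  have P2: "u n choose Suc j \<le> q * ((n - q) choose j)" for n
  proof (cases "u n")
    case 0 then show ?thesis by simp
  next
    case (Suc v)
    hence "v < u n" by simp
    hence "\<not> q * ((n - q) choose j) < Suc v choose Suc j" unfolding u_def by (rule not_less_Least)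
    thus ?thesis using Suc by simp
  qed
  have P3a: "u n choose Suc j \<le> q * f n" and P3b: "q * f n \<le> (u n choose Suc j) + q - 1" for n
  proof -
    define x where "x = (u n choose Suc j) + q - 1"
    have fx: "f n = x div q" unfolding f_def x_def by simp
    have e: "x = q * (x div q) + x mod q" by simp
    have m: "x mod q < q" using q3 by simp
    have e2: "x = q * f n + x mod q" using e fx by simp
    have x1: "x + 1 = (u n choose Suc j) + q" unfolding x_def using q3 by simp
    show "u n choose Suc j \<le> q * f n" using e2 m x1 by linarith
    show "q * f n \<le> (u n choose Suc j) + q - 1" using e2 x1 by linarith
  qed
  have P3c: "f n \<le> (n - q) choose j" for n
  proof -
    have "q * f n < q * (((n - q) choose j) + 1)" using P3b[of n] P2[of n] q3 by (simp add: algebra_simps)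
    hence "f n < ((n - q) choose j) + 1" by (metis mult_less_cancel1)
    thus ?thesis by simp
  qed
  have jj: "1 \<le> j ^ j" using j1 by simp
  have E1: "\<forall>M. eventually (\<lambda>n. M \<le> u n) at_top"
  proof
    fix M
    show "eventually (\<lambda>n. M \<le> u n) at_top"
      using eventually_ge_at_top[of "q + j ^ j * (M choose Suc j) + j"]
    proof (rule eventually_mono)
      fix n assume n: "q + j ^ j * (M choose Suc j) + j \<le> n"
      show "M \<le> u n"
      proof (rule ccontr)
        assume "\<not> M \<le> u n"
        hence "Suc (u n) choose Suc j \<le> M choose Suc j" by (intro binomial_right_mono) simp
        hence "q * ((n - q) choose j) < M choose Suc j" using P1[of n] by linarith
        moreover have "(n - q) choose j \<le> q * ((n - q) choose j)" using q3 by simp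
        ultimately have "(n - q) choose j < M choose Suc j" by linarith
        hence a: "j ^ j * ((n - q) choose j) < j ^ j * (M choose Suc j)" using jj by (intro mult_strict_left_mono) auto
        have "n - q \<le> j ^ j * ((n - q) choose j)" by (rule lin_le_binom) (use j1 n in auto)
        thus False using a n by linarith
      qed
    qed
  qed
  have E2: "eventually (\<lambda>n. Suc (u n) \<le> n) at_top"
    using eventually_ge_at_top[of "q + q * Suc j + j + 1"]
  proof (rule eventually_mono)
    fix n assume n: "q + q * Suc j + j + 1 \<le> n"
    show "Suc (u n) \<le> n"
    proof (rule ccontr)
      assume "\<not> Suc (u n) \<le> n"
      hence "n choose Suc j \<le> u n choose Suc j" by (intro binomial_right_mono) simp
      have pos: "0 < (n - q) choose j" using n by simp
      have "(n - j) * ((n - q) choose j) \<le> (n - j) * (n choose j)" by (simp add: binomial_right_mono)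
      also have "\<dots> = Suc j * (n choose Suc j)" by (rule binom_ID[symmetric])
      also have "\<dots> \<le> Suc j * (u n choose Suc j)" using \<open>n choose Suc j \<le> u n choose Suc j\<close> by (rule mult_le_mono2)
      also have "\<dots> \<le> Suc j * (q * ((n - q) choose j))" using P2[of n] by (rule mult_le_mono2)
      finally have "(n - j) * ((n - q) choose j) \<le> (Suc j * q) * ((n - q) choose j)" by (simp only: mult.assoc)
      hence "n - j \<le> Suc j * q" using pos by (subst (asm) mult_le_cancel2) blast
      thus False using n by (simp add: algebra_simps)
    qed
  qed
  define K where "K = q - 1 + C2"
  define c where "c = j ^ j * K * (2 * K * j ^ j) ^ (j - 1)"
  have E3: "eventually (\<lambda>n. q - 1 + C2 * ((n - q) choose (j - 1)) < u n choose j) at_top"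
    using eventually_ge_at_top[of "q + j"] E1[rule_format, of j] E1[rule_format, of "Suc c"]
  proof eventually_elim
    case (elim n)
    show ?case unfolding K_def
    proof (rule key_ineq)
      show "j \<ge> 1" "q \<ge> 1" using j1 q3 by auto
      show "n - q \<ge> j" "u n \<ge> j" using elim by auto
      show "q * ((n - q) choose j) < (u n choose j) + (u n choose Suc j)" using P1[of n] by simp
      show "u n > j ^ j * (q - 1 + C2) * (2 * (q - 1 + C2) * j ^ j) ^ (j - 1)"
        using elim unfolding c_def K_def by simp
    qed
  qed
  have E4: "eventually (\<lambda>n. s \<le> f n) at_top"
    using E1[rule_format, of "max (Suc j) (Suc j ^ Suc j * (s * q))"]
  proof (rule eventually_mono)
    fix n assume n: "max (Suc j) (Suc j ^ Suc j * (s * q)) \<le> u n"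
    have "u n \<le> Suc j ^ Suc j * (u n choose Suc j)" by (rule lin_le_binom) (use n in auto)
    hence "Suc j ^ Suc j * (s * q) \<le> Suc j ^ Suc j * (u n choose Suc j)" using n by linarith
    hence "s * q \<le> u n choose Suc j" by simp
    hence a: "q * s \<le> u n choose Suc j" by (simp add: mult.commute)
    have "q * s \<le> q * f n" using a P3a[of n] by linarith
    thus "s \<le> f n" using q3 by simp
  qed
  have E7: "eventually (\<lambda>n. C2 * f n \<le> card (EM n k s)) at_top"
    using eventually_ge_at_top[of "C2 * Suc j + j + 1 + q"]
  proof (rule eventually_mono)
    fix n assume n: "C2 * Suc j + j + 1 + q \<le> n"
    have "C2 * f n \<le> C2 * ((n - q) choose j)" using P3c[of n] by simp
    also have "\<dots> \<le> C2 * ((n - 1) choose j)" using n q3 by (intro mult_le_mono2 binomial_right_mono) simp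
    also have "\<dots> \<le> (n - 1) choose Suc j"
    proof -
      have "Suc j * (C2 * ((n - 1) choose j)) = (C2 * Suc j) * ((n - 1) choose j)" by (metis mult.assoc mult.left_commute)
      also have "\<dots> \<le> (n - 1 - j) * ((n - 1) choose j)" using n by (intro mult_le_mono1) simp
      also have "\<dots> = Suc j * ((n - 1) choose Suc j)" by (rule binom_ID[symmetric])
      finally show ?thesis by (metis mult_le_cancel1 zero_less_Suc)
    qed
    also have "\<dots> \<le> card (EM n k s)" using card_EM_lower[of k s n] kj s1 n by simp
    finally show "C2 * f n \<le> card (EM n k s)" .
  qed
  have E5: "eventually (\<lambda>n. q + s * j \<le> n) at_top" by (rule eventually_ge_at_top)
  have good: "eventually (\<lambda>n. card (G n) = C2 * f n \<and> G n \<subseteq> ksubsets n k \<and> nu (G n) = s \<and>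
       card (G n) \<le> card (EM n k s) \<and>
       card (shadow k (G n)) < card (shadow k (colex_initial (card (G n)) (EM n k s)))) at_top"
    using E1[rule_format, of "Suc j + s"] E2 E3 E4 E5 E7
  proof eventually_elim
    case (elim n)
    have ex: "\<exists>F. F \<subseteq> {X. X \<subseteq> {q+1..n} \<and> card X = j} \<and> card F = f n \<and> (\<forall>i<s. {q+i*j+1..q+i*j+j} \<in> F)"
      by (rule exists_F) (use elim P3c in auto)
    have FF: "FF n \<subseteq> {X. X \<subseteq> {q+1..n} \<and> card X = j}" "card (FF n) = f n" "\<forall>i<s. {q+i*j+1..q+i*j+j} \<in> FF n"
      using someI_ex[OF ex] unfolding FF_def by blast+
    have qn: "q \<le> n" using elim by simp
    note C = construction[of "FF n" s n j "f n", folded q_def, OF FF(1) FF(2) j1 s1 qn FF(3)]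
    have cG: "card (G n) = C2 * f n" using C(2) unfolding G_def C2_def by simp
    have sub: "G n \<subseteq> ksubsets n k" using C(1) unfolding G_def kj by simp
    have nuG: "nu (G n) = s" using C(3) unfolding G_def by simp
    have sh: "card (shadow k (G n)) \<le> q * f n + C2 * ((n - q) choose (j - 1))"
      using C(4) unfolding G_def C2_def kj by simp
    have low: "Suc (u n) choose (k - 1) \<le> card (shadow k (colex_initial (C2 * f n) (EM n k s)))"
    proof (rule shadow_initial_lower)
      show "1 \<le> k" "k \<le> Suc (u n)" "Suc (u n) \<le> n" "1 \<le> s" "s \<le> Suc (u n)"
        using elim kj s1 by auto
      show "s * ((Suc (u n) - 1) choose (k - 1)) \<le> C2 * f n"
        using P3a[of n] unfolding C2s kj by (simp add: mult.assoc)
    qed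
    have "card (shadow k (G n)) < Suc (u n) choose (k - 1)"
    proof -
      have "q * f n + C2 * ((n - q) choose (j - 1)) \<le> (u n choose Suc j) + q - 1 + C2 * ((n - q) choose (j - 1))"
        using P3b[of n] by simp
      also have "\<dots> < (u n choose Suc j) + (u n choose j)" using elim q3 by simp
      also have "\<dots> = Suc (u n) choose (k - 1)" unfolding kj by simp
      finally show ?thesis using sh by simp
    qed
    thus ?case using low cG sub nuG elim by simp
  qed
  have ratio: "((\<lambda>n. real (C2 * f n) / (real C2 * real (n choose j))) \<longlongrightarrow> 1) at_top"
  proof (rule tendsto_sandwich[where f = "\<lambda>n. 1 - real q * real j / (real n - real (j - 1)) - real q * real (Suc j) / (real (u n) - real j)"
        and h = "\<lambda>_. 1"])
    show "((\<lambda>_. 1::real) \<longlongrightarrow> 1) at_top" by simp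
    have l1: "((\<lambda>n. real q * real j / (real n - real (j - 1))) \<longlongrightarrow> 0) at_top"
      by (rule tendsto_shift0[where g = "\<lambda>n. n"]) (simp add: eventually_ge_at_top)
    have l2: "((\<lambda>n. real q * real (Suc j) / (real (u n) - real j)) \<longlongrightarrow> 0) at_top"
      by (rule tendsto_shift0) (rule E1)
    show "((\<lambda>n. 1 - real q * real j / (real n - real (j - 1)) - real q * real (Suc j) / (real (u n) - real j)) \<longlongrightarrow> 1) at_top"
      using tendsto_diff[OF tendsto_diff[OF tendsto_const[of "1::real"] l1] l2] by simp
    show "eventually (\<lambda>n. real (C2 * f n) / (real C2 * real (n choose j)) \<le> 1) at_top"
      using eventually_ge_at_top[of "q + j"]
    proof (rule eventually_mono)
      fix n assume n: "q + j \<le> n"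
      have "f n \<le> n choose j" using P3c[of n] binomial_right_mono[of "n - q" n j] by simp
      moreover have "0 < n choose j" using n by simp
      moreover have "0 < C2" using C2s s1 q3 by simp
      ultimately show "real (C2 * f n) / (real C2 * real (n choose j)) \<le> 1"
        by (simp add: divide_le_eq)
    qed
    show "eventually (\<lambda>n. 1 - real q * real j / (real n - real (j - 1)) - real q * real (Suc j) / (real (u n) - real j)
        \<le> real (C2 * f n) / (real C2 * real (n choose j))) at_top"
      using eventually_ge_at_top[of "q + j"] E1[rule_format, of "Suc j"]
    proof eventually_elim
      case (elim n)
      define b where "b = n - q"
      have nb: "n = b + q" using elim unfolding b_def by simp
      define Cn where "Cn = n choose j"
      define Cb where "Cb = b choose j"
      define Cn1 where "Cn1 = n choose (j - 1)"
      define X where "X = u n choose j"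
      define Y where "Y = u n choose Suc j"
      have Cnpos: "0 < Cn" unfolding Cn_def using elim by simp
      have h1: "Cb < X + f n"
      proof -
        have "q * Cb < X + Y" using P1[of n] unfolding Cb_def b_def X_def Y_def by simp
        also have "\<dots> \<le> q * X + q * f n"
        proof -
          have "X \<le> q * X" using q3 by simp
          thus ?thesis using P3a[of n] unfolding Y_def by linarith
        qed
        finally have "q * Cb < q * (X + f n)" by (simp add: algebra_simps)
        thus ?thesis by (metis mult_less_cancel1)
      qed
      have h2: "(u n - j) * X \<le> Suc j * q * Cn"
      proof -
        have "(u n - j) * X = Suc j * Y" unfolding X_def Y_def by (rule binom_ID[symmetric])
        also have "\<dots> \<le> Suc j * (q * Cb)" using P2[of n] unfolding Y_def Cb_def b_def by (rule mult_le_mono2)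
        also have "Cb \<le> Cn" unfolding Cb_def Cn_def b_def by (simp add: binomial_right_mono)
        hence "Suc j * (q * Cb) \<le> Suc j * (q * Cn)" by (intro mult_le_mono2) simp
        finally show ?thesis by (simp only: mult.assoc)
      qed
      have h3: "Cn \<le> Cb + q * Cn1"
      proof -
        have "Cn = (b + q) choose Suc (j - 1)" unfolding Cn_def nb using j1 by simp
        also have "\<dots> \<le> (b choose Suc (j - 1)) + q * ((b + q) choose (j - 1))" by (rule binom_shift)
        finally show ?thesis unfolding Cb_def Cn1_def nb using j1 by simp
      qed
      have h4: "j * Cn = (n - (j - 1)) * Cn1"
        unfolding Cn_def Cn1_def using binom_ID[of "j - 1" n] j1 by simp
      have uj: "real (u n) - real j > 0" using elim by simp
      have nj: "real n - real (j - 1) > 0" using elim q3 by simp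
      have r1: "real Cb \<le> real X + real (f n)" using h1 by simp
      have r2: "real X \<le> real (Suc j) * real q * real Cn / (real (u n) - real j)"
      proof -
        have "real ((u n - j) * X) \<le> real (Suc j * q * Cn)" using h2 by (simp only: of_nat_le_iff)
        moreover have "real (u n - j) = real (u n) - real j" using elim by (simp add: of_nat_diff)
        ultimately have "real X * (real (u n) - real j) \<le> real (Suc j) * real q * real Cn"
          by (simp only: of_nat_mult mult.commute)
        thus ?thesis using uj by (simp add: pos_le_divide_eq)
      qed
      have r3: "real Cn \<le> real Cb + real q * real Cn1" using h3 by (metis of_nat_add of_nat_mult of_nat_le_iff)
      have r4: "real Cn1 = real j * real Cn / (real n - real (j - 1))"
      proof -
        have "real (j * Cn) = real ((n - (j - 1)) * Cn1)" using h4 by (simp only:)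
        moreover have "real (n - (j - 1)) = real n - real (j - 1)" using elim q3 by (simp add: of_nat_diff)
        ultimately have "real j * real Cn = (real n - real (j - 1)) * real Cn1" by (simp only: of_nat_mult)
        thus ?thesis using nj by (simp add: eq_divide_eq mult.commute)
      qed
      have main: "real Cn * (1 - real q * real j / (real n - real (j - 1)) - real q * real (Suc j) / (real (u n) - real j))
          \<le> real (f n)"
      proof -
        have "real Cn * (1 - real q * real j / (real n - real (j - 1)) - real q * real (Suc j) / (real (u n) - real j))
           = real Cn - real q * (real j * real Cn / (real n - real (j - 1))) - real (Suc j) * real q * real Cn / (real (u n) - real j)"
          by (simp add: field_simps)
        also have "\<dots> = real Cn - real q * real Cn1 - real (Suc j) * real q * real Cn / (real (u n) - real j)"
          using r4 by simp
        also have "\<dots> \<le> real (f n)" using r1 r2 r3 by linarith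
        finally show ?thesis .
      qed
      have "0 < C2" using C2s s1 q3 by simp
      hence "real (C2 * f n) / (real C2 * real (n choose j)) = real (f n) / real Cn"
        unfolding Cn_def by simp
      also have "\<dots> \<ge> 1 - real q * real j / (real n - real (j - 1)) - real q * real (Suc j) / (real (u n) - real j)"
        using main Cnpos by (simp add: le_divide_eq mult.commute)
      finally show ?case .
    qed
  qed
  have asym: "(\<lambda>n. real (C2 * f n)) \<sim>[at_top] (\<lambda>n. real C2 * real (n choose j))"
    by (rule asymp_equivI') (rule ratio)
  have asym2: "(\<lambda>n. real (card (G n))) \<sim>[at_top] (\<lambda>n. real ((2*s+1) choose 2) * real (n choose (k-2)))"
  proof (rule asymp_equiv_transfer[OF asym])
    show "eventually (\<lambda>n. real (C2 * f n) = real (card (G n))) at_top"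
      using good by (rule eventually_mono) simp
    show "eventually (\<lambda>n. real C2 * real (n choose j) = real ((2*s+1) choose 2) * real (n choose (k-2))) at_top"
      unfolding C2_def q_def j_def by simp
  qed
  have ev: "\<forall>\<^sub>F n in at_top.
       G n \<subseteq> ksubsets n k \<and> nu (G n) = s \<and>
       card (G n) \<le> card (EM n k s) \<and>
       card (shadow k (G n)) < card (shadow k (colex_initial (card (G n)) (EM n k s)))"
    using good by (rule eventually_mono) blast
  show ?thesis using asym2 ev by blast
qed

end
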